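(* Let $\ell\ge 2$ and let $G$ be an $N$-AW graph of order $n$. Then: (1) no connected component of $\overline{G}$ is a path $P_k$ with $k\equiv 3\pmod 4$; (2) at most one connected component of $\overline{G}$ is a path $P_k$ with $k\equiv 1\pmod 4$; (3) if $G$ is $(n,\ell)$-extremal, then no connected component of $\overline{G}$ is a path with more than $4$ vertices.
   Context: All graphs are finite and simple; $\overline{G}$ is the complement; $P_k$ is the path on $k$ vertices. Labels lie in $\mathbb{Z}_\ell$. In the neighborhood Lights Out game, toggling a vertex $w$ adds $1$ (mod $\ell$) to the label of each vertex of the closed neighborhood $N[w]$; the game is won when all labels are $0$; a graph is $N$-AW if every initial labeling can be won. $\max(n,\ell)$ is the maximum number of edges of an $N$-AW graph on $n$ vertices, and an $(n,\ell)$-extremal graph is an $N$-AW graph on $n$ vertices with $\max(n,\ell)$ edges. *)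

theory Defs
  imports "HOL-Number_Theory.Cong"
begin

definition graph :: "'a set \<Rightarrow> ('a \<Rightarrow> 'a \<Rightarrow> bool) \<Rightarrow> bool" where
  "graph V E \<longleftrightarrow> finite V \<and> (\<forall>x y. E x y \<longrightarrow> x \<in> V \<and> y \<in> V)
      \<and> (\<forall>x y. E x y \<longrightarrow> E y x) \<and> (\<forall>x. \<not> E x x)"

definition edges :: "'a set \<Rightarrow> ('a \<Rightarrow> 'a \<Rightarrow> bool) \<Rightarrow> 'a set set" where
  "edges V E = {{x, y} | x y. x \<in> V \<and> y \<in> V \<and> E x y}"

definition compl_graph :: "'a set \<Rightarrow> ('a \<Rightarrow> 'a \<Rightarrow> bool) \<Rightarrow> ('a \<Rightarrow> 'a \<Rightarrow> bool)" where
  "compl_graph V E = (\<lambda>x y. x \<in> V \<and> y \<in> V \<and> x \<noteq> y \<and> \<not> E x y)"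

definition closed_nbhd :: "'a set \<Rightarrow> ('a \<Rightarrow> 'a \<Rightarrow> bool) \<Rightarrow> 'a \<Rightarrow> 'a set" where
  "closed_nbhd V E w = {u \<in> V. u = w \<or> E w u}"

text \<open>Neighbourhood Lights Out over Z_l: the game is won from labeling f if some
multiset of toggles (toggle counts t w, order is irrelevant) brings every label to 0
mod l. Toggling w adds 1 to each vertex of N[w]; so vertex v receives the sum of t w
over w with v in N[w].\<close>
definition N_AW :: "nat \<Rightarrow> 'a set \<Rightarrow> ('a \<Rightarrow> 'a \<Rightarrow> bool) \<Rightarrow> bool" where
  "N_AW l V E \<longleftrightarrow> (\<forall>f :: 'a \<Rightarrow> int. \<exists>t :: 'a \<Rightarrow> nat.
      \<forall>v \<in> V. [f v + (\<Sum>w \<in> {w \<in> V. v \<in> closed_nbhd V E w}. int (t w)) = 0] (mod int l))"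

text \<open>max(n,l): maximum number of edges of an N-AW graph on n vertices
(taken over graphs with natural-number vertices, which represent all graphs up to
isomorphism).\<close>
definition max_edges :: "nat \<Rightarrow> nat \<Rightarrow> nat" where
  "max_edges n l = Max {card (edges V E) | (V :: nat set) E.
       graph V E \<and> card V = n \<and> N_AW l V E}"

definition extremal :: "nat \<Rightarrow> nat \<Rightarrow> 'a set \<Rightarrow> ('a \<Rightarrow> 'a \<Rightarrow> bool) \<Rightarrow> bool" where
  "extremal n l V E \<longleftrightarrow> graph V E \<and> card V = n \<and> N_AW l V E
      \<and> card (edges V E) = max_edges n l"

definition component :: "'a set \<Rightarrow> ('a \<Rightarrow> 'a \<Rightarrow> bool) \<Rightarrow> 'a set \<Rightarrow> bool" where
  "component V E C \<longleftrightarrow> (\<exists>x \<in> V. C = {y. E\<^sup>*\<^sup>* x y})"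

definition is_path_on :: "('a \<Rightarrow> 'a \<Rightarrow> bool) \<Rightarrow> 'a set \<Rightarrow> nat \<Rightarrow> bool" where
  "is_path_on E C k \<longleftrightarrow> k \<ge> 1 \<and> (\<exists>p. bij_betw p {0..<k} C \<and>
      (\<forall>i<k. \<forall>j<k. E (p i) (p j) \<longleftrightarrow> (i = Suc j \<or> j = Suc i)))"

end

theory Submission
  imports Defs
begin

definition Bs :: "'a set \<Rightarrow> ('a \<Rightarrow> 'a \<Rightarrow> bool) \<Rightarrow> ('a \<Rightarrow> int) \<Rightarrow> 'a \<Rightarrow> int" where
  "Bs V E x v = (\<Sum>w\<in>{w\<in>V. compl_graph V E v w}. x w)"

lemma Nsum:
  fixes x :: "'a \<Rightarrow> int"
  assumes "graph V E" "v \<in> V"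
  shows "(\<Sum>w\<in>{w\<in>V. v \<in> closed_nbhd V E w}. x w) = sum x V - Bs V E x v"
proof -
  have fin: "finite V" using assms unfolding graph_def by auto
  have "{w\<in>V. v \<in> closed_nbhd V E w} = V - {w\<in>V. compl_graph V E v w}"
    using assms unfolding graph_def closed_nbhd_def compl_graph_def by auto
  moreover have "sum x (V - {w\<in>V. compl_graph V E v w}) = sum x V - sum x {w\<in>V. compl_graph V E v w}"
    by (rule sum_diff) (use fin in auto)
  ultimately show ?thesis unfolding Bs_def by simp
qed

lemma Nop_mod:
  fixes x y :: "'a \<Rightarrow> int"
  assumes "\<forall>w\<in>V. x w mod L = y w mod L" "finite V"
  shows "(\<Sum>w\<in>{w\<in>V. P w}. x w) mod L = (\<Sum>w\<in>{w\<in>V. P w}. y w) mod L"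
proof -
  have "(\<Sum>w\<in>{w\<in>V. P w}. x w mod L) = (\<Sum>w\<in>{w\<in>V. P w}. y w mod L)"
    using assms(1) by (intro sum.cong[OF refl]) auto
  then have "(\<Sum>w\<in>{w\<in>V. P w}. x w mod L) mod L = (\<Sum>w\<in>{w\<in>V. P w}. y w mod L) mod L" by simp
  then show ?thesis by (simp only: mod_sum_eq)
qed

lemma NAW_kernel:
  assumes g: "graph V E" and l: "l \<ge> 1"
  shows "N_AW l V E \<longleftrightarrow> (\<forall>x. (\<forall>v\<in>V. int l dvd (\<Sum>w\<in>{w\<in>V. v \<in> closed_nbhd V E w}. x w))
            \<longrightarrow> (\<forall>v\<in>V. int l dvd x v))"
proof -
  define L where "L = int l"
  have L: "L > 0" using l unfolding L_def by simp
  have fin: "finite V" using g unfolding graph_def by auto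
  define Nop where "Nop x v = (\<Sum>w\<in>{w\<in>V. v \<in> closed_nbhd V E w}. x w)" for x :: "'a \<Rightarrow> int" and v
  define S where "S = {x :: 'a \<Rightarrow> int. \<forall>v. (v \<in> V \<longrightarrow> x v \<in> {0..<L}) \<and> (v \<notin> V \<longrightarrow> x v = 0)}"
  have finS: "finite S" unfolding S_def by (rule finite_set_of_finite_funs) (use fin in auto)
  define Phi where "Phi x = (\<lambda>v. if v \<in> V then Nop x v mod L else 0)" for x
  have PhiS: "Phi ` S \<subseteq> S" unfolding S_def Phi_def using L by auto
  have Nmod: "Nop x v mod L = Nop y v mod L" if "\<forall>w\<in>V. x w mod L = y w mod L" for x y v
    unfolding Nop_def by (rule Nop_mod) (use that fin in auto)
  have Ndiff: "Nop (\<lambda>w. x w - y w) v = Nop x v - Nop y v" for x y v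
    unfolding Nop_def by (simp add: sum_subtractf)
  show ?thesis unfolding Nop_def[symmetric]
  proof
    assume aw: "N_AW l V E"
    have surj: "Phi ` S = S"
    proof
      show "Phi ` S \<subseteq> S" by (rule PhiS)
      show "S \<subseteq> Phi ` S"
      proof
        fix z assume zS: "z \<in> S"
        obtain t :: "'a \<Rightarrow> nat" where t: "\<forall>v\<in>V. [(- z v) + (\<Sum>w \<in> {w \<in> V. v \<in> closed_nbhd V E w}. int (t w)) = 0] (mod L)"
          using aw[unfolded N_AW_def, rule_format, of "\<lambda>v. - z v"] unfolding L_def by blast
        define t' where "t' = (\<lambda>v. if v \<in> V then int (t v) mod L else 0)"
        have t'S: "t' \<in> S" unfolding t'_def S_def using L by auto
        have "Phi t' = z"
        proof
          fix v show "Phi t' v = z v"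
          proof (cases "v \<in> V")
            case True
            have "Nop t' v mod L = Nop (\<lambda>w. int (t w)) v mod L"
              by (rule Nmod) (auto simp: t'_def)
            also have "\<dots> = z v mod L"
              using t True unfolding cong_0_iff Nop_def by (simp add: mod_eq_dvd_iff)
            also have "\<dots> = z v" using zS True unfolding S_def by auto
            finally show ?thesis unfolding Phi_def using True by simp
          next
            case False then show ?thesis using zS unfolding Phi_def S_def by auto
          qed
        qed
        then show "z \<in> Phi ` S" using t'S by blast
      qed
    qed
    have inj: "inj_on Phi S" by (rule eq_card_imp_inj_on) (use finS surj in auto)
    show "\<forall>x. (\<forall>v\<in>V. int l dvd Nop x v) \<longrightarrow> (\<forall>v\<in>V. int l dvd x v)"
    proof (intro allI impI ballI)
      fix x v assume h: "\<forall>v\<in>V. int l dvd Nop x v" and v: "v \<in> V"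
      define x' where "x' = (\<lambda>v. if v \<in> V then x v mod L else 0)"
      have x'S: "x' \<in> S" unfolding x'_def S_def using L by auto
      have zS: "(\<lambda>v. 0) \<in> S" unfolding S_def using L by auto
      have "Phi x' = Phi (\<lambda>v. 0)"
      proof
        fix u show "Phi x' u = Phi (\<lambda>v. 0) u"
        proof (cases "u \<in> V")
          case True
          have "Nop x' u mod L = Nop x u mod L" by (rule Nmod) (auto simp: x'_def)
          also have "\<dots> = 0" using h True unfolding L_def by simp
          finally show ?thesis unfolding Phi_def Nop_def using True by simp
        qed (simp add: Phi_def)
      qed
      then have "x' = (\<lambda>v. 0)" using inj x'S zS unfolding inj_on_def by blast
      then have "x' v = 0" by simp
      then have "x v mod L = 0" using v unfolding x'_def by simp
      then show "int l dvd x v" unfolding L_def by (simp add: dvd_eq_mod_eq_0)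
    qed
  next
    assume ker: "\<forall>x. (\<forall>v\<in>V. int l dvd Nop x v) \<longrightarrow> (\<forall>v\<in>V. int l dvd x v)"
    have inj: "inj_on Phi S"
    proof
      fix x y assume xS: "x \<in> S" and yS: "y \<in> S" and e: "Phi x = Phi y"
      have "\<forall>v\<in>V. int l dvd Nop (\<lambda>w. x w - y w) v"
      proof
        fix v assume v: "v \<in> V"
        have "Phi x v = Phi y v" using e by simp
        then have "Nop x v mod L = Nop y v mod L" using v unfolding Phi_def by simp
        then show "int l dvd Nop (\<lambda>w. x w - y w) v" unfolding Ndiff L_def
          by (simp add: mod_eq_dvd_iff)
      qed
      then have d: "\<forall>v\<in>V. L dvd x v - y v" using ker unfolding L_def by blast
      show "x = y"
      proof
        fix v show "x v = y v"
        proof (cases "v \<in> V")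
          case True
          then have "x v mod L = x v" "y v mod L = y v" using xS yS unfolding S_def by auto
          moreover have "L dvd x v - y v" using d True by blast
          then have "x v mod L = y v mod L" by (simp only: mod_eq_dvd_iff)
          ultimately show ?thesis by linarith
        next
          case False then show ?thesis using xS yS unfolding S_def by auto
        qed
      qed
    qed
    have surj: "Phi ` S = S"
      by (rule card_subset_eq) (use finS PhiS inj card_image in auto)
    show "N_AW l V E" unfolding N_AW_def
    proof
      fix f :: "'a \<Rightarrow> int"
      define z where "z = (\<lambda>v. if v \<in> V then (- f v) mod L else 0)"
      have "z \<in> S" unfolding z_def S_def using L by auto
      then obtain t where tS: "t \<in> S" and tz: "Phi t = z" using surj by (metis imageE)
      have nn: "int (nat (t w)) = t w" if "w \<in> V" for w using tS that unfolding S_def by auto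
      show "\<exists>t :: 'a \<Rightarrow> nat. \<forall>v\<in>V. [f v + (\<Sum>w\<in>{w\<in>V. v \<in> closed_nbhd V E w}. int (t w)) = 0] (mod int l)"
      proof (intro exI ballI)
        fix v assume v: "v \<in> V"
        have "(\<Sum>w\<in>{w\<in>V. v \<in> closed_nbhd V E w}. int (nat (t w))) = Nop t v"
          unfolding Nop_def by (rule sum.cong[OF refl]) (use nn in blast)
        moreover have "Phi t v = z v" using tz by simp
        then have "Nop t v mod L = (- f v) mod L" using v unfolding Phi_def z_def by simp
        ultimately show "[f v + (\<Sum>w\<in>{w\<in>V. v \<in> closed_nbhd V E w}. int (nat (t w))) = 0] (mod int l)"
          unfolding cong_def L_def by (metis add.right_inverse mod_add_right_eq)
      qed
    qed
  qed
qed

lemma kernel_Bs: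
  assumes "graph V E" "l \<ge> 1"
  shows "N_AW l V E \<longleftrightarrow> (\<forall>x. (\<forall>v\<in>V. int l dvd sum x V - Bs V E x v) \<longrightarrow> (\<forall>v\<in>V. int l dvd x v))"
  using NAW_kernel[OF assms] Nsum[OF assms(1)] by simp

lemma cg_sym: "graph V E \<Longrightarrow> compl_graph V E x y \<Longrightarrow> compl_graph V E y x"
  unfolding graph_def compl_graph_def by blast

lemma cg_V: "compl_graph V E x y \<Longrightarrow> x \<in> V \<and> y \<in> V"
  unfolding compl_graph_def by blast

lemma rtranclp_sym:
  assumes "\<And>x y. R x y \<Longrightarrow> R y x" "R\<^sup>*\<^sup>* x y"
  shows "R\<^sup>*\<^sup>* y x"
  using assms(2)
proof (induction rule: rtranclp_induct)
  case base then show ?case by simp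
next
  case (step y z)
  then show ?case using assms(1) by (meson converse_rtranclp_into_rtranclp)
qed

lemma comp_props:
  assumes g: "graph V E" and c: "component V (compl_graph V E) C"
  shows "C \<subseteq> V" "\<And>c w. c \<in> C \<Longrightarrow> compl_graph V E c w \<Longrightarrow> w \<in> C"
    "\<And>v w. w \<in> C \<Longrightarrow> compl_graph V E v w \<Longrightarrow> v \<in> C"
proof -
  obtain x0 where x0: "x0 \<in> V" and C: "C = {y. (compl_graph V E)\<^sup>*\<^sup>* x0 y}"
    using c unfolding component_def by blast
  have "y \<in> V" if "(compl_graph V E)\<^sup>*\<^sup>* x0 y" for y
    using that by (induction rule: rtranclp_induct) (use x0 cg_V[of V E] in blast)+
  then show "C \<subseteq> V" using C by blast
  show "\<And>c w. c \<in> C \<Longrightarrow> compl_graph V E c w \<Longrightarrow> w \<in> C"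
    using C by (auto intro: rtranclp.rtrancl_into_rtrancl)
  show "\<And>v w. w \<in> C \<Longrightarrow> compl_graph V E v w \<Longrightarrow> v \<in> C"
    using C cg_sym[OF g] by (auto intro: rtranclp.rtrancl_into_rtrancl)
qed

lemma comp_disj:
  assumes g: "graph V E" and c1: "component V (compl_graph V E) C1"
    and c2: "component V (compl_graph V E) C2" and ne: "C1 \<noteq> C2"
  shows "C1 \<inter> C2 = {}"
proof (rule ccontr)
  assume "C1 \<inter> C2 \<noteq> {}"
  then obtain z where z: "z \<in> C1" "z \<in> C2" by blast
  obtain a where a: "C1 = {y. (compl_graph V E)\<^sup>*\<^sup>* a y}" using c1 unfolding component_def by blast
  obtain b where b: "C2 = {y. (compl_graph V E)\<^sup>*\<^sup>* b y}" using c2 unfolding component_def by blast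
  have sy: "\<And>x y. compl_graph V E x y \<Longrightarrow> compl_graph V E y x" using cg_sym[OF g] by blast
  have az: "(compl_graph V E)\<^sup>*\<^sup>* a z" and bz: "(compl_graph V E)\<^sup>*\<^sup>* b z" using z a b by auto
  have za: "(compl_graph V E)\<^sup>*\<^sup>* z a" using rtranclp_sym[of "compl_graph V E" a z] sy az by blast
  have zb: "(compl_graph V E)\<^sup>*\<^sup>* z b" using rtranclp_sym[of "compl_graph V E" b z] sy bz by blast
  have "(compl_graph V E)\<^sup>*\<^sup>* a b" "(compl_graph V E)\<^sup>*\<^sup>* b a"
    using az zb bz za by (meson rtranclp_trans)+
  then have "C1 = C2" unfolding a b by (auto intro: rtranclp_trans)
  then show False using ne by simp
qed

lemma path_adj:
  assumes g: "graph V E" and c: "component V (compl_graph V E) C"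
    and p: "bij_betw p {0..<k} C"
    and adj: "\<forall>i<k. \<forall>j<k. compl_graph V E (p i) (p j) \<longleftrightarrow> (i = Suc j \<or> j = Suc i)"
    and i: "i < k"
  shows "compl_graph V E v (p i) \<longleftrightarrow> (\<exists>j<k. v = p j \<and> (j = Suc i \<or> i = Suc j))"
proof
  assume h: "compl_graph V E v (p i)"
  have "p i \<in> C" using p i by (auto simp: bij_betw_def)
  then have "v \<in> C" using comp_props(3)[OF g c] h by blast
  then obtain j where j: "j < k" "v = p j" using p by (auto simp: bij_betw_def)
  then show "\<exists>j<k. v = p j \<and> (j = Suc i \<or> i = Suc j)" using adj h i by auto
next
  assume "\<exists>j<k. v = p j \<and> (j = Suc i \<or> i = Suc j)"
  then show "compl_graph V E v (p i)" using adj i by auto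
qed

definition gv :: "nat \<Rightarrow> int" where
  "gv i = (if i mod 4 = 0 then 1 else if i mod 4 = 2 then -1 else 0)"

lemma gsum: "(\<Sum>i<k. gv i) = (if k mod 4 = 1 \<or> k mod 4 = 2 then 1 else 0)"
proof (induction k)
  case 0 then show ?case by simp
next
  case (Suc k)
  have "k mod 4 = 0 \<or> k mod 4 = 1 \<or> k mod 4 = 2 \<or> k mod 4 = 3" by presburger
  moreover have "Suc k mod 4 = (if k mod 4 = 3 then 0 else Suc (k mod 4))" by presburger
  ultimately show ?case using Suc by (auto simp: gv_def)
qed

lemma gnb:
  assumes k: "odd k" and j: "j < k"
  shows "(\<Sum>i<k. if j = Suc i \<or> i = Suc j then gv i else 0) = 0"
proof (cases "even j")
  case True
  have "\<forall>i<k. (if j = Suc i \<or> i = Suc j then gv i else 0) = 0"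
  proof (intro allI impI)
    fix i assume "i < k"
    show "(if j = Suc i \<or> i = Suc j then gv i else 0) = 0"
    proof (cases "j = Suc i \<or> i = Suc j")
      case True
      then have "odd i" using \<open>even j\<close> by auto
      then have "i mod 4 = 1 \<or> i mod 4 = 3" by presburger
      then show ?thesis by (auto simp: gv_def)
    qed simp
  qed
  then show ?thesis by simp
next
  case False
  define m where "m = j - 1"
  have m: "j = Suc m" "even m" using False unfolding m_def by presburger+
  have jk: "Suc j < k" using k j False by presburger
  have "(\<Sum>i<k. if j = Suc i \<or> i = Suc j then gv i else 0) = sum gv {i\<in>{..<k}. j = Suc i \<or> i = Suc j}"
    by (rule sum.inter_filter[symmetric]) simp
  also have "{i\<in>{..<k}. j = Suc i \<or> i = Suc j} = {m, Suc (Suc m)}" using m jk j by auto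
  also have "sum gv {m, Suc (Suc m)} = gv m + gv (Suc (Suc m))" by simp
  also have "\<dots> = 0"
  proof -
    have "m mod 4 = 0 \<or> m mod 4 = 2" using m by presburger
    moreover have "Suc (Suc m) mod 4 = (if m mod 4 = 0 then 2 else 0)" if "m mod 4 = 0 \<or> m mod 4 = 2"
      using that by presburger
    ultimately show ?thesis by (auto simp: gv_def)
  qed
  finally show ?thesis .
qed

lemma pathvec:
  assumes g: "graph V E" and c: "component V (compl_graph V E) C"
    and p: "bij_betw p {0..<k} C"
    and adj: "\<forall>i<k. \<forall>j<k. compl_graph V E (p i) (p j) \<longleftrightarrow> (i = Suc j \<or> j = Suc i)"
    and k: "odd k"
  defines "x \<equiv> \<lambda>w. \<Sum>i<k. if w = p i then gv i else 0"
  shows "\<forall>v\<in>V. Bs V E x v = 0" "sum x V = (\<Sum>i<k. gv i)" "x (p 0) = 1" "\<forall>w. w \<notin> C \<longrightarrow> x w = 0"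
proof -
  have fin: "finite V" using g unfolding graph_def by auto
  have pC: "p i \<in> C" if "i < k" for i using p that by (auto simp: bij_betw_def)
  have pV: "p i \<in> V" if "i < k" for i using pC[OF that] comp_props(1)[OF g c] by blast
  have pinj: "p i = p j \<longleftrightarrow> i = j" if "i < k" "j < k" for i j
    using p that unfolding bij_betw_def inj_on_def by auto
  have swap: "sum x W = (\<Sum>i<k. if p i \<in> W then gv i else 0)" if "finite W" for W
  proof -
    have "sum x W = (\<Sum>i<k. \<Sum>w\<in>W. if w = p i then gv i else 0)"
      unfolding x_def by (rule sum.swap)
    also have "\<dots> = (\<Sum>i<k. if p i \<in> W then gv i else 0)"
      using that by (simp add: sum.delta)
    finally show ?thesis .
  qed
  show "\<forall>v\<in>V. Bs V E x v = 0"
  proof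
    fix v assume v: "v \<in> V"
    have "Bs V E x v = (\<Sum>i<k. if p i \<in> {w\<in>V. compl_graph V E v w} then gv i else 0)"
      unfolding Bs_def by (rule swap) (use fin in auto)
    also have "\<dots> = (\<Sum>i<k. if (\<exists>j<k. v = p j \<and> (j = Suc i \<or> i = Suc j)) then gv i else 0)"
      by (rule sum.cong[OF refl]) (use pV path_adj[OF g c p adj] in auto)
    also have "\<dots> = 0"
    proof (cases "v \<in> C")
      case True
      then obtain j0 where j0: "j0 < k" "v = p j0" using p by (auto simp: bij_betw_def)
      have "(\<Sum>i<k. if (\<exists>j<k. v = p j \<and> (j = Suc i \<or> i = Suc j)) then gv i else 0)
          = (\<Sum>i<k. if j0 = Suc i \<or> i = Suc j0 then gv i else 0)"
        by (rule sum.cong[OF refl]) (use j0 pinj in auto)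
      also have "\<dots> = 0" by (rule gnb[OF k j0(1)])
      finally show ?thesis .
    next
      case False
      then have "\<forall>j<k. v \<noteq> p j" using pC by auto
      then show ?thesis by (intro sum.neutral) auto
    qed
    finally show "Bs V E x v = 0" .
  qed
  show "sum x V = (\<Sum>i<k. gv i)"
    using swap[OF fin] pV by simp
  have k0: "0 < k" using k by (cases k) auto
  have "x (p 0) = (\<Sum>i<k. if 0 = i then gv i else 0)"
    unfolding x_def by (rule sum.cong[OF refl]) (use pinj k0 in auto)
  also have "\<dots> = 1" using k0 by (simp add: sum.delta gv_def)
  finally show "x (p 0) = 1" .
  show "\<forall>w. w \<notin> C \<longrightarrow> x w = 0"
    unfolding x_def using pC by (auto intro!: sum.neutral)
qed

lemma part1:
  assumes l: "l \<ge> 2" and g: "graph V E" and aw: "N_AW l V E"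
    and c: "component V (compl_graph V E) C" and pa: "is_path_on (compl_graph V E) C k"
  shows "k mod 4 \<noteq> 3"
proof
  assume k3: "k mod 4 = 3"
  obtain p where p: "bij_betw p {0..<k} C"
    and adj: "\<forall>i<k. \<forall>j<k. compl_graph V E (p i) (p j) \<longleftrightarrow> (i = Suc j \<or> j = Suc i)"
    using pa unfolding is_path_on_def by blast
  have k: "odd k" using k3 by presburger
  define x where "x = (\<lambda>w. \<Sum>i<k. if w = p i then gv i else 0)"
  note pv = pathvec[OF g c p adj k, folded x_def]
  have ker: "\<forall>x. (\<forall>v\<in>V. int l dvd sum x V - Bs V E x v) \<longrightarrow> (\<forall>v\<in>V. int l dvd x v)"
    using kernel_Bs[OF g] l aw by simp
  have "sum x V = 0" using pv(2) gsum[of k] k3 by simp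
  then have "\<forall>v\<in>V. int l dvd sum x V - Bs V E x v" using pv(1) by simp
  then have "\<forall>v\<in>V. int l dvd x v" using ker by blast
  moreover have "0 < k" using k by (cases k) auto
  then have "p 0 \<in> C" using bij_betw_apply[OF p] by simp
  then have "p 0 \<in> V" using comp_props(1)[OF g c] by blast
  ultimately have "int l dvd x (p 0)" by blast
  moreover have "x (p 0) = 1" using pv(3) unfolding x_def by simp
  ultimately have "int l dvd 1" by simp
  then show False using l by simp
qed

lemma part2:
  assumes l: "l \<ge> 2" and g: "graph V E" and aw: "N_AW l V E"
    and c1: "component V (compl_graph V E) C1" and pa1: "is_path_on (compl_graph V E) C1 k1"
    and k1: "k1 mod 4 = 1"
    and c2: "component V (compl_graph V E) C2" and pa2: "is_path_on (compl_graph V E) C2 k2"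
    and k2: "k2 mod 4 = 1"
  shows "C1 = C2"
proof (rule ccontr)
  assume ne: "C1 \<noteq> C2"
  obtain p1 where p1: "bij_betw p1 {0..<k1} C1"
    and adj1: "\<forall>i<k1. \<forall>j<k1. compl_graph V E (p1 i) (p1 j) \<longleftrightarrow> (i = Suc j \<or> j = Suc i)"
    using pa1 unfolding is_path_on_def by blast
  obtain p2 where p2: "bij_betw p2 {0..<k2} C2"
    and adj2: "\<forall>i<k2. \<forall>j<k2. compl_graph V E (p2 i) (p2 j) \<longleftrightarrow> (i = Suc j \<or> j = Suc i)"
    using pa2 unfolding is_path_on_def by blast
  have o1: "odd k1" using k1 by presburger
  have o2: "odd k2" using k2 by presburger
  define x1 where "x1 = (\<lambda>w. \<Sum>i<k1. if w = p1 i then gv i else 0)"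
  define x2 where "x2 = (\<lambda>w. \<Sum>i<k2. if w = p2 i then gv i else 0)"
  note pv1 = pathvec[OF g c1 p1 adj1 o1, folded x1_def]
  note pv2 = pathvec[OF g c2 p2 adj2 o2, folded x2_def]
  define x where "x = (\<lambda>w. x1 w - x2 w)"
  have ker: "\<forall>x. (\<forall>v\<in>V. int l dvd sum x V - Bs V E x v) \<longrightarrow> (\<forall>v\<in>V. int l dvd x v)"
    using kernel_Bs[OF g] l aw by simp
  have s1: "sum x1 V = 1" using pv1(2) gsum[of k1] k1 by simp
  have s2: "sum x2 V = 1" using pv2(2) gsum[of k2] k2 by simp
  have "sum x V = 0" unfolding x_def using s1 s2 by (simp add: sum_subtractf)
  moreover have "Bs V E x v = Bs V E x1 v - Bs V E x2 v" for v
    unfolding Bs_def x_def by (simp add: sum_subtractf)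
  ultimately have "\<forall>v\<in>V. int l dvd sum x V - Bs V E x v" using pv1(1) pv2(1) by simp
  then have "\<forall>v\<in>V. int l dvd x v" using ker by blast
  moreover have "0 < k1" using o1 by (cases k1) auto
  then have "p1 0 \<in> C1" using bij_betw_apply[OF p1] by simp
  moreover have "C1 \<inter> C2 = {}" by (rule comp_disj[OF g c1 c2 ne])
  moreover have "C1 \<subseteq> V" by (rule comp_props(1)[OF g c1])
  ultimately have dv: "int l dvd x (p1 0)" and nC: "p1 0 \<notin> C2" by blast+
  have "x2 (p1 0) = 0" using pv2(4) nC unfolding x2_def by simp
  moreover have "x1 (p1 0) = 1" using pv1(3) unfolding x1_def by simp
  ultimately have "int l dvd x (p1 0)" "x (p1 0) = 1" using dv unfolding x_def by auto
  then have "int l dvd 1" by simp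
  then show False using l by simp
qed

lemma iso_max:
  assumes g: "graph V E" and aw: "N_AW l V E"
  shows "card (edges V E) \<le> max_edges (card V) l"
proof -
  have fin: "finite V" using g unfolding graph_def by auto
  define W where "W = {0..<card V}"
  obtain h where h: "bij_betw h V W" using ex_bij_betw_finite_nat[OF fin] unfolding W_def by blast
  define F where "F = (\<lambda>x y. \<exists>u\<in>V. \<exists>w\<in>V. E u w \<and> x = h u \<and> y = h w)"
  have hinj: "h u = h w \<longleftrightarrow> u = w" if "u \<in> V" "w \<in> V" for u w
    using h that unfolding bij_betw_def inj_on_def by auto
  have hW: "h u \<in> W" if "u \<in> V" for u using h that unfolding bij_betw_def by auto
  have hsurj: "\<exists>u\<in>V. j = h u" if "j \<in> W" for j using h that unfolding bij_betw_def by auto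
  have Fh: "F (h u) (h w) \<longleftrightarrow> E u w" if "u \<in> V" "w \<in> V" for u w
    unfolding F_def using hinj that by auto
  have gW1: "x \<in> W \<and> y \<in> W \<and> F y x" if fxy: "F x y" for x y
  proof -
    obtain u w where "u \<in> V" "w \<in> V" "E u w" "x = h u" "y = h w" using fxy unfolding F_def by blast
    then show ?thesis using hW g Fh unfolding graph_def by auto
  qed
  have gW2: "\<not> F x x" for x unfolding F_def using hinj g unfolding graph_def by metis
  have gW: "graph W F" unfolding graph_def using gW1 gW2 W_def by auto
  have cW: "card W = card V" unfolding W_def by simp
  have awW: "N_AW l W F"
    unfolding N_AW_def
  proof
    fix f :: "nat \<Rightarrow> int"
    obtain t' :: "'a \<Rightarrow> nat" where t': "\<forall>v\<in>V. [f (h v) + (\<Sum>w \<in> {w \<in> V. v \<in> closed_nbhd V E w}. int (t' w)) = 0] (mod int l)"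
      using aw[unfolded N_AW_def, rule_format, of "\<lambda>v. f (h v)"] by blast
    define t where "t = (\<lambda>i. t' (inv_into V h i))"
    show "\<exists>t :: nat \<Rightarrow> nat. \<forall>v\<in>W. [f v + (\<Sum>w\<in>{w\<in>W. v \<in> closed_nbhd W F w}. int (t w)) = 0] (mod int l)"
    proof (intro exI ballI)
      fix i assume i: "i \<in> W"
      then obtain v where v: "v \<in> V" "i = h v" using hsurj by blast
      have cn: "h v \<in> closed_nbhd W F (h w) \<longleftrightarrow> v \<in> closed_nbhd V E w" if "w \<in> V" for w
        unfolding closed_nbhd_def using hinj Fh hW v that by auto
      have seteq: "{w\<in>W. h v \<in> closed_nbhd W F w} = h ` {w\<in>V. v \<in> closed_nbhd V E w}"
      proof
        show "{w\<in>W. h v \<in> closed_nbhd W F w} \<subseteq> h ` {w\<in>V. v \<in> closed_nbhd V E w}"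
        proof
          fix j assume "j \<in> {w\<in>W. h v \<in> closed_nbhd W F w}"
          then obtain u where "u \<in> V" "j = h u" "h v \<in> closed_nbhd W F (h u)" using hsurj by blast
          then show "j \<in> h ` {w\<in>V. v \<in> closed_nbhd V E w}" using cn by blast
        qed
        show "h ` {w\<in>V. v \<in> closed_nbhd V E w} \<subseteq> {w\<in>W. h v \<in> closed_nbhd W F w}"
          using cn hW by auto
      qed
      have injs: "inj_on h {w\<in>V. v \<in> closed_nbhd V E w}"
        using h unfolding bij_betw_def inj_on_def by auto
      have "(\<Sum>w\<in>{w\<in>W. h v \<in> closed_nbhd W F w}. int (t w)) = (\<Sum>w\<in>{w\<in>V. v \<in> closed_nbhd V E w}. int (t (h w)))"
        unfolding seteq by (rule sum.reindex[OF injs, unfolded comp_def])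
      also have "\<dots> = (\<Sum>w\<in>{w\<in>V. v \<in> closed_nbhd V E w}. int (t' w))"
        unfolding t_def by (rule sum.cong[OF refl]) (use h in \<open>auto simp: bij_betw_def\<close>)
      finally show "[f i + (\<Sum>w\<in>{w\<in>W. i \<in> closed_nbhd W F w}. int (t w)) = 0] (mod int l)"
        using t' v by simp
    qed
  qed
  have eW: "edges W F = (\<lambda>e. h ` e) ` edges V E"
  proof
    show "edges W F \<subseteq> (\<lambda>e. h ` e) ` edges V E"
    proof
      fix e assume "e \<in> edges W F"
      then obtain x y where "e = {x, y}" "F x y" unfolding edges_def by blast
      then obtain u w where uw: "u \<in> V" "w \<in> V" "E u w" "x = h u" "y = h w" unfolding F_def by blast
      have "e = h ` {u, w}" using uw \<open>e = {x, y}\<close> by simp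
      moreover have "{u, w} \<in> edges V E" using uw unfolding edges_def by blast
      ultimately show "e \<in> (\<lambda>e. h ` e) ` edges V E" by blast
    qed
    show "(\<lambda>e. h ` e) ` edges V E \<subseteq> edges W F"
    proof
      fix e assume "e \<in> (\<lambda>e. h ` e) ` edges V E"
      then obtain u w where uw: "u \<in> V" "w \<in> V" "E u w" "e = h ` {u, w}" unfolding edges_def by blast
      have "F (h u) (h w)" "h u \<in> W" "h w \<in> W" "e = {h u, h w}" using uw Fh hW by auto
      then show "e \<in> edges W F" unfolding edges_def by blast
    qed
  qed
  have ePow: "edges V E \<subseteq> Pow V" unfolding edges_def by auto
  have "inj_on (\<lambda>e. h ` e) (edges V E)"
    using inj_on_image_Pow[of h V] h ePow unfolding bij_betw_def by (meson inj_on_subset)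
  then have ce: "card (edges W F) = card (edges V E)" unfolding eW by (rule card_image)
  define S where "S = {card (edges V E) | (V :: nat set) E. graph V E \<and> card V = card W \<and> N_AW l V E}"
  have "S \<subseteq> {..2 ^ card W}"
  proof
    fix m assume "m \<in> S"
    then obtain V' :: "nat set" and E' where m: "m = card (edges V' E')" "graph V' E'" "card V' = card W"
      unfolding S_def by blast
    have "finite V'" using m(2) unfolding graph_def by auto
    moreover have "edges V' E' \<subseteq> Pow V'" unfolding edges_def by auto
    ultimately have "card (edges V' E') \<le> card (Pow V')" by (intro card_mono) auto
    then show "m \<in> {..2 ^ card W}" using m \<open>finite V'\<close> by (simp add: card_Pow)
  qed
  then have finS: "finite S" using finite_subset by blast
  have "card (edges W F) \<in> S" unfolding S_def using gW awW by blast
  then have "card (edges W F) \<le> Max S" using finS by simp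
  then show ?thesis using ce cW unfolding max_edges_def S_def by simp
qed

lemma part3:
  assumes l: "l \<ge> 2" and g: "graph V E" and aw: "N_AW l V E"
    and c: "component V (compl_graph V E) C" and pa: "is_path_on (compl_graph V E) C k"
    and ext: "extremal n l V E"
  shows "k \<le> 4"
proof (rule ccontr)
  assume "\<not> k \<le> 4"
  then have k4: "4 < k" by simp
  obtain p where p: "bij_betw p {0..<k} C"
    and adj: "\<forall>i<k. \<forall>j<k. compl_graph V E (p i) (p j) \<longleftrightarrow> (i = Suc j \<or> j = Suc i)"
    using pa unfolding is_path_on_def by blast
  have fin: "finite V" using g unfolding graph_def by auto
  have pC: "p i \<in> C" if "i < k" for i using p that by (auto simp: bij_betw_def)
  have pV: "p i \<in> V" if "i < k" for i using pC[OF that] comp_props(1)[OF g c] by blast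
  have pinj: "p i = p j \<longleftrightarrow> i = j" if "i < k" "j < k" for i j
    using p that unfolding bij_betw_def inj_on_def by auto
  have pV5: "p 0 \<in> V" "p 1 \<in> V" "p 2 \<in> V" "p 3 \<in> V" "p 4 \<in> V" using pV k4 by auto
  have dist: "p 0 \<noteq> p 1" "p 0 \<noteq> p 2" "p 0 \<noteq> p 3" "p 0 \<noteq> p 4" "p 1 \<noteq> p 2" "p 1 \<noteq> p 3"
     "p 1 \<noteq> p 4" "p 2 \<noteq> p 3" "p 2 \<noteq> p 4" "p 3 \<noteq> p 4"
    using pinj k4 by (simp_all add: pinj)
  define a where "a = p 3"
  define b where "b = p 4"
  have ab: "compl_graph V E a b" unfolding a_def b_def using adj k4 by auto
  then have abV: "a \<in> V" "b \<in> V" "a \<noteq> b" "\<not> E a b" "\<not> E b a"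
    using g unfolding compl_graph_def graph_def by auto
  define E' where "E' = (\<lambda>u v. E u v \<or> (u = a \<and> v = b) \<or> (u = b \<and> v = a))"
  have g': "graph V E'" using g abV unfolding graph_def E'_def by auto
  have cg': "compl_graph V E' u v \<longleftrightarrow> compl_graph V E u v \<and> \<not> ((u = a \<and> v = b) \<or> (u = b \<and> v = a))" for u v
    unfolding compl_graph_def E'_def by auto
  have eE': "edges V E' = insert {a, b} (edges V E)"
    unfolding edges_def E'_def using abV by auto
  have nab: "{a, b} \<notin> edges V E"
  proof
    assume "{a, b} \<in> edges V E"
    then obtain u w where "{a, b} = {u, w}" "E u w" unfolding edges_def by blast
    then show False using abV by (auto simp: doubleton_eq_iff)
  qed
  have finE: "finite (edges V E)"
    by (rule finite_subset[of _ "Pow V"]) (use fin in \<open>auto simp: edges_def\<close>)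
  have cardE': "card (edges V E') = Suc (card (edges V E))"
    unfolding eE' using finE nab by simp
  have nb: "compl_graph V E v (p i) \<longleftrightarrow> (\<exists>j<k. v = p j \<and> (j = Suc i \<or> i = Suc j))" if "i < k" for v i
    by (rule path_adj[OF g c p adj that])
  have nb0: "compl_graph V E v (p 0) \<longleftrightarrow> v = p 1" for v
  proof -
    have "(\<exists>j<k. v = p j \<and> (j = Suc 0 \<or> 0 = Suc j)) \<longleftrightarrow> v = p 1" using k4 by auto
    then show ?thesis using nb[of 0 v] k4 by simp
  qed
  have nb2: "compl_graph V E v (p 2) \<longleftrightarrow> v = p 1 \<or> v = p 3" for v
  proof -
    have k13: "1 < k" "3 < k" using k4 by auto
    have "(\<exists>j<k. v = p j \<and> (j = Suc 2 \<or> 2 = Suc j)) \<longleftrightarrow> v = p 1 \<or> v = p 3"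
    proof
      assume "\<exists>j<k. v = p j \<and> (j = Suc 2 \<or> 2 = Suc j)"
      then show "v = p 1 \<or> v = p 3" by (auto simp: numeral_eq_Suc)
    next
      assume "v = p 1 \<or> v = p 3"
      then show "\<exists>j<k. v = p j \<and> (j = Suc 2 \<or> 2 = Suc j)"
      proof
        assume "v = p 1" then show ?thesis using k13 by (intro exI[of _ 1]) simp
      next
        assume "v = p 3" then show ?thesis using k13 by (intro exI[of _ 3]) simp
      qed
    qed
    then show ?thesis using nb[of 2 v] k4 by simp
  qed
  have sy: "compl_graph V E u v \<longleftrightarrow> compl_graph V E v u" for u v using cg_sym[OF g] by blast
  have N0: "{w\<in>V. compl_graph V E' (p 0) w} = {p 1}"
    using cg' sy nb0 dist pV5 unfolding a_def b_def by auto
  have N2: "{w\<in>V. compl_graph V E' (p 2) w} = {p 1, p 3}"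
    using cg' sy nb2 dist pV5 unfolding a_def b_def by auto
  have l1: "l \<ge> 1" using l by simp
  have aw': "N_AW l V E'"
    unfolding kernel_Bs[OF g' l1]
  proof (intro allI impI)
    fix y assume hy: "\<forall>v\<in>V. int l dvd sum y V - Bs V E' y v"
    define \<sigma> where "\<sigma> = sum y V"
    have "int l dvd \<sigma> - y (p 1)" using hy pV5 N0 unfolding Bs_def \<sigma>_def by force
    moreover have "int l dvd \<sigma> - (y (p 1) + y (p 3))" using hy pV5 N2 dist unfolding Bs_def \<sigma>_def by force
    ultimately have "int l dvd (\<sigma> - y (p 1)) - (\<sigma> - (y (p 1) + y (p 3)))" by (rule dvd_diff)
    then have ya: "int l dvd y a" unfolding a_def by simp
    define x where "x = (\<lambda>w. y w + (if w = p 0 then y b else 0) - (if w = p 2 then y b else 0))"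
    have sx: "sum x V = \<sigma>"
      unfolding x_def \<sigma>_def using fin pV5 by (simp add: sum_subtractf sum.distrib sum.delta)
    have Bx: "Bs V E x v = Bs V E y v + (if compl_graph V E v (p 0) then y b else 0)
        - (if compl_graph V E v (p 2) then y b else 0)" for v
    proof -
      have fW: "finite {w\<in>V. compl_graph V E v w}" using fin by simp
      show ?thesis unfolding Bs_def x_def using fW pV5
        by (simp add: sum_subtractf sum.distrib sum.delta)
    qed
    have By: "Bs V E y v = Bs V E' y v + (if v = a then y b else 0) + (if v = b then y a else 0)" if v: "v \<in> V" for v
    proof -
      have fW: "finite {w\<in>V. compl_graph V E' v w}" using fin by simp
      consider "v = a" | "v = b" | "v \<noteq> a" "v \<noteq> b" by blast
      then show ?thesis
      proof cases
        case 1
        have "{w\<in>V. compl_graph V E v w} = insert b {w\<in>V. compl_graph V E' v w}"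
          using cg' ab abV 1 by auto
        moreover have "b \<notin> {w\<in>V. compl_graph V E' v w}" using cg' 1 by auto
        ultimately show ?thesis unfolding Bs_def using fW 1 abV by simp
      next
        case 2
        have "{w\<in>V. compl_graph V E v w} = insert a {w\<in>V. compl_graph V E' v w}"
          using cg' ab abV 2 sy by auto
        moreover have "a \<notin> {w\<in>V. compl_graph V E' v w}" using cg' 2 by auto
        ultimately show ?thesis unfolding Bs_def using fW 2 abV by simp
      next
        case 3
        have "{w\<in>V. compl_graph V E v w} = {w\<in>V. compl_graph V E' v w}"
          using cg' 3 by auto
        then show ?thesis unfolding Bs_def using 3 by simp
      qed
    qed
    have "\<forall>v\<in>V. int l dvd sum x V - Bs V E x v"
    proof
      fix v assume v: "v \<in> V"
      have h1: "int l dvd \<sigma> - Bs V E' y v" using hy v unfolding \<sigma>_def by blast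
      have eq: "sum x V - Bs V E x v = (\<sigma> - Bs V E' y v) - (if v = b then y a else 0)"
        unfolding sx Bx By[OF v] nb0 nb2 using dist unfolding a_def b_def by auto
      show "int l dvd sum x V - Bs V E x v"
        unfolding eq using h1 ya by (cases "v = b") auto
    qed
    then have xk: "\<forall>v\<in>V. int l dvd x v"
      using aw unfolding kernel_Bs[OF g l1] by blast
    have "x b = y b" unfolding x_def b_def using dist by auto
    then have yb: "int l dvd y b" using xk abV by metis
    show "\<forall>v\<in>V. int l dvd y v"
    proof
      fix v assume v: "v \<in> V"
      have "y v = x v - (if v = p 0 then y b else 0) + (if v = p 2 then y b else 0)"
        unfolding x_def by simp
      then show "int l dvd y v" using xk v yb by simp
    qed
  qed
  have "card (edges V E') \<le> max_edges (card V) l" by (rule iso_max[OF g' aw'])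
  moreover have "card (edges V E) = max_edges (card V) l" "card V = n" using ext unfolding extremal_def by auto
  ultimately show False using cardE' by simp
qed

theorem corollary3p2:
  fixes l n :: nat and V :: "'a set" and E :: "'a \<Rightarrow> 'a \<Rightarrow> bool"
  assumes "l \<ge> 2" and "graph V E" and "card V = n" and "N_AW l V E"
  shows "(\<forall>C k. component V (compl_graph V E) C \<and> is_path_on (compl_graph V E) C k
            \<longrightarrow> k mod 4 \<noteq> 3)
    \<and> (\<forall>C1 C2 k1 k2. component V (compl_graph V E) C1 \<and> is_path_on (compl_graph V E) C1 k1
          \<and> k1 mod 4 = 1 \<and> component V (compl_graph V E) C2
          \<and> is_path_on (compl_graph V E) C2 k2 \<and> k2 mod 4 = 1 \<longrightarrow> C1 = C2)
    \<and> (extremal n l V E \<longrightarrow> (\<forall>C k. component V (compl_graph V E) C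
          \<and> is_path_on (compl_graph V E) C k \<longrightarrow> k \<le> 4))"
  using part1[OF assms(1,2,4)] part2[OF assms(1,2,4)] part3[OF assms(1,2,4)] by blast

end
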